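(* Let $K\ge2$, $E=[-1,1]^K$, $\theta$ the uniform probability measure on $[-1,1]$, and $\Phi:E\to[0,\Phi^*]$ measurable. Let $\pi$ be the probability density on $E$ with respect to $\bigotimes_{i=1}^K\theta(du_i)$ given by $\pi(u)=\exp\{-\Phi(u)\}/\int_E\exp\{-\Phi(v)\}\bigotimes_i\theta(dv_i)$. Let $k\in\mathbb{N}$, $k<K$, and let $a_1,\dots,a_k$ be a partition of $\{1,\dots,K\}$ into disjoint nonempty subsets. Define the (deterministic-scan) Gibbs kernel $$M(u,du')=\Big(\prod_{j=1}^k\pi(u'_{a_j}\mid u'_{a_1:a_{j-1}},u_{a_{j+1}:a_k})\Big)\bigotimes_{i=1}^K\theta(du'_i),$$ where $\pi(u'_{a_j}\mid u'_{a_1:a_{j-1}},u_{a_{j+1}:a_k})=\pi(u'_{a_1:a_j},u_{a_{j+1}:a_k})\big/\int_{[-1,1]^{|a_j|}}\pi(u'_{a_1:a_j},u_{a_{j+1}:a_k})\bigotimes_{i\in a_j}\theta(du'_i)$. Then for all $u,\tilde u\in E$, $$M(\tilde u,du')\ge\exp\{-2\Phi^*(k-1)\}\,M(u,du').$$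
   Context: Notation $u_{a_1:a_{j-1}}$ denotes the coordinates of $u$ with indices in $a_1\cup\dots\cup a_{j-1}$, and $(u'_{a_1:a_j},u_{a_{j+1}:a_k})$ denotes the point of $E$ whose coordinates in $a_1\cup\cdots\cup a_j$ are taken from $u'$ and the remaining ones from $u$. *)

theory Defs
  imports "HOL-Probability.Probability"
begin

definition theta :: "real measure" where
  "theta = uniform_measure lborel {-1..1}"

text \<open>Product measure over an index set I (coordinates in E are extensional maps).\<close>
definition prodtheta :: "nat set \<Rightarrow> (nat \<Rightarrow> real) measure" where
  "prodtheta I = PiM I (\<lambda>_. theta)"

definition target_dens :: "nat \<Rightarrow> ((nat \<Rightarrow> real) \<Rightarrow> real) \<Rightarrow> (nat \<Rightarrow> real) \<Rightarrow> real" where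
  "target_dens K Phi u =
     exp (- Phi u) / (\<integral> v. exp (- Phi v) \<partial>prodtheta {1..K})"

definition mixpt :: "(nat \<Rightarrow> nat set) \<Rightarrow> nat \<Rightarrow> (nat \<Rightarrow> real) \<Rightarrow> (nat \<Rightarrow> real) \<Rightarrow> (nat \<Rightarrow> real)" where
  "mixpt a j u' u = (\<lambda>i. if i \<in> (\<Union>l\<in>{1..j}. a l) then u' i else u i)"

definition cond_dens ::
  "nat \<Rightarrow> ((nat \<Rightarrow> real) \<Rightarrow> real) \<Rightarrow> (nat \<Rightarrow> nat set) \<Rightarrow> nat \<Rightarrow> (nat \<Rightarrow> real) \<Rightarrow> (nat \<Rightarrow> real) \<Rightarrow> real" where
  "cond_dens K Phi a j u u' =
     target_dens K Phi (mixpt a j u' u) /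
     (\<integral> w. target_dens K Phi (mixpt a j (\<lambda>i. if i \<in> a j then w i else u' i) u)
        \<partial>prodtheta (a j))"

definition gibbs_dens ::
  "nat \<Rightarrow> ((nat \<Rightarrow> real) \<Rightarrow> real) \<Rightarrow> nat \<Rightarrow> (nat \<Rightarrow> nat set) \<Rightarrow> (nat \<Rightarrow> real) \<Rightarrow> (nat \<Rightarrow> real) \<Rightarrow> real" where
  "gibbs_dens K Phi k a u u' = (\<Prod>j\<in>{1..k}. cond_dens K Phi a j u u')"

definition gibbs_kernel ::
  "nat \<Rightarrow> ((nat \<Rightarrow> real) \<Rightarrow> real) \<Rightarrow> nat \<Rightarrow> (nat \<Rightarrow> nat set) \<Rightarrow> (nat \<Rightarrow> real) \<Rightarrow> (nat \<Rightarrow> real) measure" where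
  "gibbs_kernel K Phi k a u =
     density (prodtheta {1..K}) (\<lambda>u'. ennreal (gibbs_dens K Phi k a u u'))"

end

theory Submission
  imports Defs
begin

lemma theta_prob: "prob_space theta"
  unfolding theta_def by (rule prob_space_uniform_measure) auto

lemma space_theta[simp]: "space theta = UNIV" and sets_theta[simp]: "sets theta = sets borel"
  unfolding theta_def by auto

lemma prodtheta_prob: "prob_space (prodtheta I)"
  unfolding prodtheta_def by (rule prob_space_PiM) (rule theta_prob)

lemma space_prodtheta: "space (prodtheta I) = PiE I (\<lambda>_. UNIV)"
  unfolding prodtheta_def by (simp add: space_PiM)

lemma ext_lemma:
  assumes sub: "\<And>l. l \<in> {1..j} \<Longrightarrow> a l \<subseteq> {1..K}" and v: "v \<in> space (prodtheta {1..K})"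
  shows "(\<lambda>i. if i \<in> (\<Union>l\<in>{1..j}. a l) then f i else v i) \<in> PiE {1..K} (\<lambda>_. UNIV)"
proof -
  have "v i = undefined" if "i \<notin> {1..K}" for i
    using v that by (auto simp: space_prodtheta PiE_def extensional_def)
  moreover have "i \<notin> (\<Union>l\<in>{1..j}. a l)" if "i \<notin> {1..K}" for i using sub that by blast
  ultimately show ?thesis by (simp add: PiE_def extensional_def)
qed

lemma mix_meas:
  assumes sub: "\<And>l. l \<in> {1..j} \<Longrightarrow> a l \<subseteq> {1..K}" and v: "v \<in> space (prodtheta {1..K})"
  shows "(\<lambda>u'. mixpt a j u' v) \<in> prodtheta {1..K} \<rightarrow>\<^sub>M prodtheta {1..K}"
  unfolding mixpt_def prodtheta_def
proof (rule measurable_PiM_single')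
  fix i assume i: "i \<in> {1..K}"
  show "(\<lambda>u'. if i \<in> (\<Union>l\<in>{1..j}. a l) then u' i else v i) \<in> Pi\<^sub>M {1..K} (\<lambda>_. theta) \<rightarrow>\<^sub>M theta"
    using i by (cases "i \<in> (\<Union>l\<in>{1..j}. a l)") auto
next
  show "(\<lambda>\<omega> i. if i \<in> (\<Union>l\<in>{1..j}. a l) then \<omega> i else v i) \<in> space (Pi\<^sub>M {1..K} (\<lambda>_. theta)) \<rightarrow> (\<Pi>\<^sub>E i\<in>{1..K}. space theta)"
  proof (rule Pi_I)
    fix w show "(\<lambda>i. if i \<in> (\<Union>l\<in>{1..j}. a l) then w i else v i) \<in> (\<Pi>\<^sub>E i\<in>{1..K}. space theta)"
      using ext_lemma[of j a K v w, OF sub v] by simp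
  qed
qed

lemma mix_meas2:
  assumes sub: "\<And>l. l \<in> {1..j} \<Longrightarrow> a l \<subseteq> {1..K}" and v: "v \<in> space (prodtheta {1..K})"
    and j: "j \<ge> 1"
  shows "(\<lambda>(u',w). mixpt a j (\<lambda>i. if i \<in> a j then w i else u' i) v) \<in> prodtheta {1..K} \<Otimes>\<^sub>M prodtheta (a j) \<rightarrow>\<^sub>M prodtheta {1..K}"
proof -
  have "(\<lambda>x i. (\<lambda>i x. if i \<in> (\<Union>l\<in>{1..j}. a l) then (if i \<in> a j then snd x i else fst x i) else v i) i x) \<in> prodtheta {1..K} \<Otimes>\<^sub>M prodtheta (a j) \<rightarrow>\<^sub>M prodtheta {1..K}"
    unfolding prodtheta_def
  proof (rule measurable_PiM_single')
    fix i assume i: "i \<in> {1..K}"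
    show "(\<lambda>x. if i \<in> (\<Union>l\<in>{1..j}. a l) then (if i \<in> a j then snd x i else fst x i) else v i) \<in> Pi\<^sub>M {1..K} (\<lambda>_. theta) \<Otimes>\<^sub>M Pi\<^sub>M (a j) (\<lambda>_. theta) \<rightarrow>\<^sub>M theta"
    proof (cases "i \<in> (\<Union>l\<in>{1..j}. a l)")
      case True
      show ?thesis
      proof (cases "i \<in> a j")
        case True
        have "(\<lambda>x. snd x i) \<in> Pi\<^sub>M {1..K} (\<lambda>_. theta) \<Otimes>\<^sub>M Pi\<^sub>M (a j) (\<lambda>_. theta) \<rightarrow>\<^sub>M theta"
          using True by (intro measurable_compose[OF measurable_snd measurable_component_singleton])
        then show ?thesis using True \<open>i \<in> (\<Union>l\<in>{1..j}. a l)\<close> by simp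
      next
        case False
        have "(\<lambda>x. fst x i) \<in> Pi\<^sub>M {1..K} (\<lambda>_. theta) \<Otimes>\<^sub>M Pi\<^sub>M (a j) (\<lambda>_. theta) \<rightarrow>\<^sub>M theta"
          using i by (intro measurable_compose[OF measurable_fst measurable_component_singleton])
        then show ?thesis using False \<open>i \<in> (\<Union>l\<in>{1..j}. a l)\<close> by simp
      qed
    next
      case False then show ?thesis by simp
    qed
  next
    show "(\<lambda>\<omega> i. if i \<in> (\<Union>l\<in>{1..j}. a l) then (if i \<in> a j then snd \<omega> i else fst \<omega> i) else v i) \<in> space (Pi\<^sub>M {1..K} (\<lambda>_. theta) \<Otimes>\<^sub>M Pi\<^sub>M (a j) (\<lambda>_. theta)) \<rightarrow> (\<Pi>\<^sub>E i\<in>{1..K}. space theta)"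
    proof (rule Pi_I)
      fix w show "(\<lambda>i. if i \<in> (\<Union>l\<in>{1..j}. a l) then (if i \<in> a j then snd w i else fst w i) else v i) \<in> (\<Pi>\<^sub>E i\<in>{1..K}. space theta)"
        using ext_lemma[of j a K v "\<lambda>i. if i \<in> a j then snd w i else fst w i", OF sub v] by simp
    qed
  qed
  moreover have "(\<lambda>(u',w). mixpt a j (\<lambda>i. if i \<in> a j then w i else u' i) v) =
     (\<lambda>x i. (\<lambda>i x. if i \<in> (\<Union>l\<in>{1..j}. a l) then (if i \<in> a j then snd x i else fst x i) else v i) i x)"
  proof (intro ext)
    fix x i show "(\<lambda>(u',w). mixpt a j (\<lambda>i. if i \<in> a j then w i else u' i) v) x i =
     (\<lambda>x i. (\<lambda>i x. if i \<in> (\<Union>l\<in>{1..j}. a l) then (if i \<in> a j then snd x i else fst x i) else v i) i x) x i"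
      by (cases x) (simp add: mixpt_def)
  qed
  ultimately show ?thesis by simp
qed

lemma int_bounds:
  fixes g :: "'a \<Rightarrow> real"
  assumes "prob_space M" "g \<in> borel_measurable M" "\<And>x. x \<in> space M \<Longrightarrow> lo \<le> g x \<and> g x \<le> hi"
  shows "lo \<le> integral\<^sup>L M g \<and> integral\<^sup>L M g \<le> hi"
proof -
  interpret prob_space M by fact
  have b: "norm (g x) \<le> max \<bar>lo\<bar> \<bar>hi\<bar>" if "x \<in> space M" for x
    using assms(3)[OF that] by (smt (verit) real_norm_def)
  have i: "integrable M g"
    by (rule integrable_const_bound[where B="max \<bar>lo\<bar> \<bar>hi\<bar>"]) (use assms b in \<open>auto intro!: AE_I2\<close>)
  show ?thesis using assms(3) by (auto intro!: integral_ge_const integral_le_const AE_I2 i)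
qed

lemma cond_bounds:
  assumes meas: "Phi \<in> borel_measurable (prodtheta {1..K})"
    and bnd: "\<And>x. x \<in> space (prodtheta {1..K}) \<Longrightarrow> 0 \<le> Phi x \<and> Phi x \<le> Phistar"
    and sub: "\<And>l. l \<in> {1..j} \<Longrightarrow> a l \<subseteq> {1..K}" and j: "j \<ge> 1"
    and v: "v \<in> space (prodtheta {1..K})" and u': "u' \<in> space (prodtheta {1..K})"
  shows "exp (- Phistar) \<le> cond_dens K Phi a j v u' \<and> cond_dens K Phi a j v u' \<le> exp Phistar"
proof -
  define Z where "Z = (\<integral> v. exp (- Phi v) \<partial>prodtheta {1..K})"
  define e where "e = exp (- Phistar)"
  have e0: "e > 0" unfolding e_def by simp
  have ebnd: "\<And>x. x \<in> space (prodtheta {1..K}) \<Longrightarrow> e \<le> exp (- Phi x) \<and> exp (- Phi x) \<le> 1"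
    using bnd unfolding e_def by auto
  have Zb: "e \<le> Z \<and> Z \<le> 1" unfolding Z_def
    by (rule int_bounds[OF prodtheta_prob]) (use meas ebnd in auto)
  have Z0: "Z > 0" using Zb e0 by linarith
  have td: "target_dens K Phi x = exp (- Phi x) / Z" for x
    unfolding target_dens_def Z_def by simp
  have tdb: "e / Z \<le> target_dens K Phi x \<and> target_dens K Phi x \<le> 1 / Z"
    if "x \<in> space (prodtheta {1..K})" for x
    using ebnd[OF that] Z0 unfolding td by (auto simp: divide_right_mono)
  have tdm: "target_dens K Phi \<in> borel_measurable (prodtheta {1..K})"
    unfolding td using meas by simp
  define N where "N = target_dens K Phi (mixpt a j u' v)"
  define D where "D = (\<integral> w. target_dens K Phi (mixpt a j (\<lambda>i. if i \<in> a j then w i else u' i) v)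
        \<partial>prodtheta (a j))"
  have Nb: "e / Z \<le> N \<and> N \<le> 1 / Z" unfolding N_def
    by (rule tdb) (use ext_lemma[of j a K v u', OF sub v] in \<open>simp add: mixpt_def space_prodtheta\<close>)
  have mm: "(\<lambda>w. mixpt a j (\<lambda>i. if i \<in> a j then w i else u' i) v) \<in> prodtheta (a j) \<rightarrow>\<^sub>M prodtheta {1..K}"
    using measurable_compose[OF measurable_Pair1'[OF u', of "prodtheta (a j)"] mix_meas2[of j a K v, OF sub v j]]
    by simp
  have Db: "e / Z \<le> D \<and> D \<le> 1 / Z" unfolding D_def
  proof (rule int_bounds[OF prodtheta_prob])
    show "(\<lambda>w. target_dens K Phi (mixpt a j (\<lambda>i. if i \<in> a j then w i else u' i) v)) \<in> borel_measurable (prodtheta (a j))"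
      using measurable_compose[OF mm tdm] .
    fix w assume "w \<in> space (prodtheta (a j))"
    show "e / Z \<le> target_dens K Phi (mixpt a j (\<lambda>i. if i \<in> a j then w i else u' i) v) \<and>
          target_dens K Phi (mixpt a j (\<lambda>i. if i \<in> a j then w i else u' i) v) \<le> 1 / Z"
      by (rule tdb) (use ext_lemma[of j a K v "\<lambda>i. if i \<in> a j then w i else u' i", OF sub v] in \<open>simp add: mixpt_def space_prodtheta\<close>)
  qed
  have cd: "cond_dens K Phi a j v u' = N / D" unfolding cond_dens_def N_def D_def ..
  have D0: "D > 0" using Db e0 Z0 by (smt (verit) divide_pos_pos)
  have "e * D \<le> e * (1 / Z)" using Db e0 by (intro mult_left_mono) auto
  also have "\<dots> \<le> N" using Nb by simp
  finally have l: "e \<le> N / D" using D0 by (simp add: pos_le_divide_eq)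
  have "N \<le> 1 / Z" using Nb by simp
  also have "1 / Z = exp Phistar * (e / Z)" unfolding e_def by (simp add: exp_minus field_simps)
  also have "\<dots> \<le> exp Phistar * D" using Db by (intro mult_left_mono) auto
  finally have r: "N / D \<le> exp Phistar" using D0 by (simp add: pos_divide_le_eq)
  show ?thesis using l r cd e_def by simp
qed

lemma cond_meas:
  assumes meas: "Phi \<in> borel_measurable (prodtheta {1..K})"
    and sub: "\<And>l. l \<in> {1..j} \<Longrightarrow> a l \<subseteq> {1..K}" and j: "j \<ge> 1"
    and v: "v \<in> space (prodtheta {1..K})"
  shows "(\<lambda>u'. cond_dens K Phi a j v u') \<in> borel_measurable (prodtheta {1..K})"
proof -
  have tdm: "target_dens K Phi \<in> borel_measurable (prodtheta {1..K})"
    unfolding target_dens_def using meas by simp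
  interpret sf: sigma_finite_measure "prodtheta (a j)"
    by (rule prob_space_imp_sigma_finite[OF prodtheta_prob])
  have m1: "(\<lambda>u'. target_dens K Phi (mixpt a j u' v)) \<in> borel_measurable (prodtheta {1..K})"
    using measurable_compose[OF mix_meas[of j a K v, OF sub v] tdm] .
  have m2: "case_prod (\<lambda>u' w. target_dens K Phi (mixpt a j (\<lambda>i. if i \<in> a j then w i else u' i) v))
      \<in> borel_measurable (prodtheta {1..K} \<Otimes>\<^sub>M prodtheta (a j))"
    using measurable_compose[OF mix_meas2[of j a K v, OF sub v j] tdm] by (simp add: case_prod_beta')
  have m3: "(\<lambda>u'. \<integral> w. target_dens K Phi (mixpt a j (\<lambda>i. if i \<in> a j then w i else u' i) v) \<partial>prodtheta (a j))
      \<in> borel_measurable (prodtheta {1..K})"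
    by (rule sf.borel_measurable_lebesgue_integral[OF m2])
  show ?thesis unfolding cond_dens_def using m1 m3 by (rule borel_measurable_divide)
qed


theorem proposition4p3:
  fixes K k :: nat and Phi :: "(nat \<Rightarrow> real) \<Rightarrow> real" and Phistar :: real
    and a :: "nat \<Rightarrow> nat set"
  assumes "K \<ge> 2"
    and "Phi \<in> borel_measurable (prodtheta {1..K})"
    and "\<And>u. u \<in> space (prodtheta {1..K}) \<Longrightarrow> 0 \<le> Phi u \<and> Phi u \<le> Phistar"
    and "k < K"
    and "\<And>j. j \<in> {1..k} \<Longrightarrow> a j \<noteq> {}"
    and "\<And>j l. j \<in> {1..k} \<Longrightarrow> l \<in> {1..k} \<Longrightarrow> j \<noteq> l \<Longrightarrow> a j \<inter> a l = {}"
    and "(\<Union>j\<in>{1..k}. a j) = {1..K}"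
    and "u \<in> space (prodtheta {1..K})" and "ut \<in> space (prodtheta {1..K})"
    and "A \<in> sets (prodtheta {1..K})"
  shows "emeasure (gibbs_kernel K Phi k a ut) A
           \<ge> ennreal (exp (- 2 * Phistar * (real k - 1))) * emeasure (gibbs_kernel K Phi k a u) A"
proof -
  note meas = assms(2) and bnd = assms(3) and un = assms(7) and u = assms(8) and ut = assms(9)
  let ?P = "prodtheta {1..K}"
  have k1: "k \<ge> 1"
  proof (rule ccontr)
    assume "\<not> k \<ge> 1" then have "k = 0" by simp
    then show False using un assms(1) by auto
  qed
  have sub: "\<And>l. l \<in> {1..j} \<Longrightarrow> a l \<subseteq> {1..K}" if "j \<le> k" for j
    using un that by auto
  have cb: "exp (- Phistar) \<le> cond_dens K Phi a j v u' \<and> cond_dens K Phi a j v u' \<le> exp Phistar"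
    if "j \<in> {1..k}" "v \<in> space ?P" "u' \<in> space ?P" for j v u'
    using cond_bounds[of Phi K Phistar j a v u', OF meas bnd sub _ that(2,3)] that(1) by auto
  have gm: "(\<lambda>u'. gibbs_dens K Phi k a v u') \<in> borel_measurable ?P" if "v \<in> space ?P" for v
    unfolding gibbs_dens_def
  proof (rule borel_measurable_prod)
    fix j assume "j \<in> {1..k}"
    then show "(\<lambda>u'. cond_dens K Phi a j v u') \<in> borel_measurable ?P"
      using cond_meas[of Phi K j a v, OF meas sub _ that] by auto
  qed
  have mixk: "mixpt a k X ut = mixpt a k X u" for X
  proof
    fix i
    show "mixpt a k X ut i = mixpt a k X u i"
    proof (cases "i \<in> {1..K}")
      case True then show ?thesis using un by (simp add: mixpt_def)
    next
      case False
      then have "ut i = undefined" "u i = undefined" using u ut by (auto simp: space_prodtheta PiE_def extensional_def)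
      moreover have "i \<notin> (\<Union>j\<in>{1..k}. a j)" using False un by simp
      ultimately show ?thesis by (simp add: mixpt_def)
    qed
  qed
  have ck: "cond_dens K Phi a k ut u' = cond_dens K Phi a k u u'" for u'
    unfolding cond_dens_def mixk ..
  define c where "c = exp (- 2 * Phistar * (real k - 1))"
  have c0: "c \<ge> 0" unfolding c_def by simp
  have cpow: "c = exp (- 2 * Phistar) ^ (k - 1)"
    unfolding c_def using k1 by (simp add: exp_of_nat_mult[symmetric] of_nat_diff mult_ac)
  have pt: "c * gibbs_dens K Phi k a u u' \<le> gibbs_dens K Phi k a ut u'" and gpos: "gibbs_dens K Phi k a u u' \<ge> 0"
    if u': "u' \<in> space ?P" for u'
  proof -
    have split: "{1..k} = insert k {1..k-1}" using k1 by auto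
    have nk: "k \<notin> {1..k-1}" by auto
    have pi: "(\<Prod>j\<in>{1..k}. f j) = f k * (\<Prod>j\<in>{1..k-1}. f j)" for f :: "nat \<Rightarrow> real"
      unfolding split by (rule prod.insert) (use nk in auto)
    have "(\<Prod>j\<in>{1..k-1}. exp (- 2 * Phistar) * cond_dens K Phi a j u u') \<le> (\<Prod>j\<in>{1..k-1}. cond_dens K Phi a j ut u')"
    proof (rule prod_mono)
      fix j assume j: "j \<in> {1..k-1}"
      then have jk: "j \<in> {1..k}" by auto
      have b1: "exp (- Phistar) \<le> cond_dens K Phi a j u u' \<and> cond_dens K Phi a j u u' \<le> exp Phistar"
        using cb[OF jk u u'] .
      have b2: "exp (- Phistar) \<le> cond_dens K Phi a j ut u'"
        using cb[OF jk ut u'] by simp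
      have "exp (- 2 * Phistar) * cond_dens K Phi a j u u' \<le> exp (- 2 * Phistar) * exp Phistar"
        using b1 by (intro mult_left_mono) auto
      also have "\<dots> = exp (- Phistar)" by (simp add: exp_add[symmetric])
      finally show "0 \<le> exp (- 2 * Phistar) * cond_dens K Phi a j u u' \<and>
          exp (- 2 * Phistar) * cond_dens K Phi a j u u' \<le> cond_dens K Phi a j ut u'"
        using b1 b2 by (smt (verit) exp_gt_zero zero_le_mult_iff)
    qed
    also have "(\<Prod>j\<in>{1..k-1}. exp (- 2 * Phistar) * cond_dens K Phi a j u u') = c * (\<Prod>j\<in>{1..k-1}. cond_dens K Phi a j u u')"
      by (simp add: prod.distrib cpow)
    finally have r: "c * (\<Prod>j\<in>{1..k-1}. cond_dens K Phi a j u u') \<le> (\<Prod>j\<in>{1..k-1}. cond_dens K Phi a j ut u')" .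
    have kk: "k \<in> {1..k}" using k1 by auto
    have C0: "cond_dens K Phi a k u u' \<ge> 0" using cb[OF kk u u'] by (smt (verit) exp_gt_zero)
    have "c * gibbs_dens K Phi k a u u' = cond_dens K Phi a k u u' * (c * (\<Prod>j\<in>{1..k-1}. cond_dens K Phi a j u u'))"
      unfolding gibbs_dens_def pi by (simp add: mult_ac)
    also have "\<dots> \<le> cond_dens K Phi a k u u' * (\<Prod>j\<in>{1..k-1}. cond_dens K Phi a j ut u')"
      using r C0 by (rule mult_left_mono)
    also have "\<dots> = gibbs_dens K Phi k a ut u'"
      unfolding gibbs_dens_def pi by (simp add: ck)
    finally show "c * gibbs_dens K Phi k a u u' \<le> gibbs_dens K Phi k a ut u'" .
    show "gibbs_dens K Phi k a u u' \<ge> 0" unfolding gibbs_dens_def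
      by (rule prod_nonneg) (use cb[OF _ u u'] in \<open>smt (verit) exp_gt_zero\<close>)
  qed
  have mu: "(\<lambda>x. ennreal (gibbs_dens K Phi k a u x)) \<in> borel_measurable ?P"
    using gm[OF u] by simp
  have mut: "(\<lambda>x. ennreal (gibbs_dens K Phi k a ut x)) \<in> borel_measurable ?P"
    using gm[OF ut] by simp
  have "ennreal c * emeasure (gibbs_kernel K Phi k a u) A
      = ennreal c * (\<integral>\<^sup>+ x. ennreal (gibbs_dens K Phi k a u x) * indicator A x \<partial>?P)"
    unfolding gibbs_kernel_def using mu assms(10) by (simp add: emeasure_density)
  also have "\<dots> = (\<integral>\<^sup>+ x. ennreal c * (ennreal (gibbs_dens K Phi k a u x) * indicator A x) \<partial>?P)"
    by (rule nn_integral_cmult[symmetric]) (use mu assms(10) in simp)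
  also have "\<dots> \<le> (\<integral>\<^sup>+ x. ennreal (gibbs_dens K Phi k a ut x) * indicator A x \<partial>?P)"
  proof (rule nn_integral_mono)
    fix x assume x: "x \<in> space ?P"
    have "ennreal c * ennreal (gibbs_dens K Phi k a u x) = ennreal (c * gibbs_dens K Phi k a u x)"
      using c0 gpos[OF x] by (simp add: ennreal_mult)
    also have "\<dots> \<le> ennreal (gibbs_dens K Phi k a ut x)" using pt[OF x] by (rule ennreal_leI)
    finally show "ennreal c * (ennreal (gibbs_dens K Phi k a u x) * indicator A x)
        \<le> ennreal (gibbs_dens K Phi k a ut x) * indicator A x"
      by (cases "x \<in> A") (auto simp: mult.assoc[symmetric])
  qed
  also have "\<dots> = emeasure (gibbs_kernel K Phi k a ut) A"
    unfolding gibbs_kernel_def using mut assms(10) by (simp add: emeasure_density)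
  finally show ?thesis unfolding c_def .
qed

end
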